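(* For every $n$, let $\mathbf C_n$ be a point process in $\mathcal C(G'')$ (a random discrete multiset in $\mathcal C(G'')$) consisting only of pointed perturbed diamonds with parameter $n$. Assume that for every $T<\infty$, $\lim_n \mathbb P(\mathbf C_n\cap A_{n,T}\ne\emptyset)=0$. Then every subsequential weak limit of $(\mathbf C_n)_n$ (as point processes in $\mathcal C(G'')$) almost surely consists only of perturbed pointed horoballs of type II (possibly with infinite delay).
   Context: $G,G'$ are finitely generated groups with neutral elements $o,o'$, word metrics $d,d'$ from Cayley graphs with respect to finite generating sets, ball volumes $v_n,v'_n$, growth rates $a=\lim v_n^{1/n}>1$, $a'=\lim (v'_n)^{1/n}>1$, and $c:=\log a/\log a'$. $G''=G\times G'$ has origin $o''=(o,o')$ and metric $\rho_c((x,x'),(y,y'))=d(x,y)+d'(x',y')/c$. Fix a non-decreasing $f:\mathbb Z_{\ge0}\to\mathbb Z_{\ge0}$ and a strictly increasing sequence $(r_j)$ in $\mathbb Z_{\ge0}$ with $f(0)=0$, $r'_j:=f(r_j)$, $0<\inf_n v'_{r'_n}/v_{r_n}\le \sup_n v'_{r'_n}/v_{r_n}<\infty$ and $\forall m\,\exists N\,\forall n\ge N:|f(n+m)-f(n)-cm|\le1$. Perturbed diamond: $D_n(x''):=\bigcup_{t=0}^{r_n}\{(y,y'):d(x,y)=r_n-t,\ d'(x',y')\le f(t)\}$ for $x''=(x,x')$; a pointed perturbed diamond is $(D_n(x''),x'')$. Horocompactification $\overline{G''}$ of $(G'',\rho_c)$: with $\rho_{x''}(y'')=\rho_c(x'',y'')-\rho_c(x'',o'')$,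 the closure of $\{\rho_{x''}\}$ among $1$-Lipschitz functions vanishing at $o''$ under pointwise convergence; similarly $\overline G,\overline{G'}$, and $\partial G=\overline G\setminus G$, $\partial G'$. For $\theta\in\partial G$, $\theta'\in\partial G'$, $(\theta,\theta')\in\partial G''$ is the function $(y,y')\mapsto d_\theta(y)+d_{\theta'}(y')/c$. $\mathcal C(G'')$ is the Polish space of pairs $(B,\theta)$ with $B\subseteq G''$ nonempty and $\theta\in\overline{G''}$, with the product of the Fell topology (pointwise convergence of indicators) and the topology of $\overline{G''}$; a discrete set in $\mathcal C(G'')$ is a multiset such that each $y''\in G''$ lies in $B$ for only finitely many elements $(B,\theta)$; point processes are random discrete sets, with weak convergence of their laws with respect to vague convergence of counting measures. $A_{n,T}$ is the set of pointed perturbed diamonds with parameter $n$ whose center $(x,x')$ satisfies either ($d(o,x)<r_n+T$ and $d'(o',x')<T$) or ($d'(o',x')<r'_n+T$ and $d(o,x)<T$). A perturbed pointed horoball of type II is a pointed set $(B,\theta'')$ which is a limit in $\mathcal C(G'')$ of pointed perturbed diamonds $(D_{n_k}(x''_k),x''_k)$ (parameters $n_k\to\infty$) with centers $x''_k=(x_k,x'_k)$ satisfying $d(x_k,o)\to\infty$ and $d'(x'_k,o')\to\infty$; additionally $(G'',\theta'')$ for any $\theta''\in\partial G\times\partial G'$ counts as one with infinite delay. *)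

theory Defs
  imports "HOL-Analysis.Analysis" "HOL-Probability.Probability"
begin

text \<open>Groups are modelled as types of class group_add (not necessarily commutative);
  the neutral element is 0. A finite generating set S; the Cayley graph has edges x -- x+s,
  s in S, so d(x,y) is the word length of -x+y over S and its inverses.\<close>

definition fin_generating :: "'a::group_add set \<Rightarrow> bool" where
  "fin_generating S \<longleftrightarrow> finite S \<and>
     (\<forall>g. \<exists>ws. set ws \<subseteq> S \<union> uminus ` S \<and> sum_list ws = g)"

definition word_len :: "'a::group_add set \<Rightarrow> 'a \<Rightarrow> nat" where
  "word_len S g = (LEAST n. \<exists>ws. length ws = n \<and> set ws \<subseteq> S \<union> uminus ` S \<and> sum_list ws = g)"

definition word_dist :: "'a::group_add set \<Rightarrow> 'a \<Rightarrow> 'a \<Rightarrow> nat" where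
  "word_dist S x y = word_len S (- x + y)"

definition ball_vol :: "'a::group_add set \<Rightarrow> nat \<Rightarrow> nat" where
  "ball_vol S n = card {x. word_dist S 0 x \<le> n}"

definition growth_rate :: "'a::group_add set \<Rightarrow> real" where
  "growth_rate S = lim (\<lambda>n. root n (real (ball_vol S n)))"

definition cexp :: "'a::group_add set \<Rightarrow> 'b::group_add set \<Rightarrow> real" where
  "cexp S S' = ln (growth_rate S) / ln (growth_rate S')"

definition rho :: "'a::group_add set \<Rightarrow> 'b::group_add set \<Rightarrow> ('a \<times> 'b) \<Rightarrow> ('a \<times> 'b) \<Rightarrow> real" where
  "rho S S' p q = real (word_dist S (fst p) (fst q)) + real (word_dist S' (snd p) (snd q)) / cexp S S'"

definition horo_fun :: "('p \<Rightarrow> 'p \<Rightarrow> real) \<Rightarrow> 'p \<Rightarrow> 'p \<Rightarrow> ('p \<Rightarrow> real)" where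
  "horo_fun \<delta> base x = (\<lambda>y. \<delta> x y - \<delta> x base)"

text \<open>Closure in the topology of pointwise convergence (product topology on functions).\<close>
definition horo_closure :: "('p \<Rightarrow> 'p \<Rightarrow> real) \<Rightarrow> 'p \<Rightarrow> ('p \<Rightarrow> real) set" where
  "horo_closure \<delta> base = closure (range (horo_fun \<delta> base))"

definition horo_boundary :: "('p \<Rightarrow> 'p \<Rightarrow> real) \<Rightarrow> 'p \<Rightarrow> ('p \<Rightarrow> real) set" where
  "horo_boundary \<delta> base = horo_closure \<delta> base - range (horo_fun \<delta> base)"

abbreviation bdry :: "'a::group_add set \<Rightarrow> ('a \<Rightarrow> real) set" where
  "bdry S \<equiv> horo_boundary (\<lambda>x y. real (word_dist S x y)) 0"

text \<open>A pointed set is a pair (B, theta): B is a subset of G'' given by its indicator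
  (a predicate), theta an element of the horocompactification of (G'', rho_c).
  The ambient space carries the product topology, i.e. pointwise convergence of
  indicators (Fell topology) times pointwise convergence of functions.\<close>

type_synonym ('a, 'b) pset = "(('a \<times> 'b) \<Rightarrow> bool) \<times> (('a \<times> 'b) \<Rightarrow> real)"

definition Cspace :: "'a::group_add set \<Rightarrow> 'b::group_add set \<Rightarrow> ('a, 'b) pset set" where
  "Cspace S S' = {\<xi>. (\<exists>y. fst \<xi> y) \<and> snd \<xi> \<in> horo_closure (rho S S') (0, 0)}"

definition Ctop :: "'a::group_add set \<Rightarrow> 'b::group_add set \<Rightarrow> ('a, 'b) pset topology" where
  "Ctop S S' = subtopology euclidean (Cspace S S')"

definition diamond :: "'a::group_add set \<Rightarrow> 'b::group_add set \<Rightarrow> (nat \<Rightarrow> nat) \<Rightarrow> (nat \<Rightarrow> nat)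
    \<Rightarrow> nat \<Rightarrow> ('a \<times> 'b) \<Rightarrow> ('a \<times> 'b) \<Rightarrow> bool" where
  "diamond S S' f r n x = (\<lambda>y. \<exists>t\<le>r n. word_dist S (fst x) (fst y) = r n - t \<and>
                                     word_dist S' (snd x) (snd y) \<le> f t)"

text \<open>Pointed perturbed diamond (D_n(x''), x''), the point x'' being viewed in the
  horocompactification via its horofunction.\<close>
definition pdiam :: "'a::group_add set \<Rightarrow> 'b::group_add set \<Rightarrow> (nat \<Rightarrow> nat) \<Rightarrow> (nat \<Rightarrow> nat)
    \<Rightarrow> nat \<Rightarrow> ('a \<times> 'b) \<Rightarrow> ('a, 'b) pset" where
  "pdiam S S' f r n x = (diamond S S' f r n x, horo_fun (rho S S') (0, 0) x)"

definition A_set :: "'a::group_add set \<Rightarrow> 'b::group_add set \<Rightarrow> (nat \<Rightarrow> nat) \<Rightarrow> (nat \<Rightarrow> nat)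
    \<Rightarrow> nat \<Rightarrow> real \<Rightarrow> ('a, 'b) pset set" where
  "A_set S S' f r n T = {pdiam S S' f r n x | x.
      (real (word_dist S 0 (fst x)) < real (r n) + T \<and> real (word_dist S' 0 (snd x)) < T) \<or>
      (real (word_dist S' 0 (snd x)) < real (f (r n)) + T \<and> real (word_dist S 0 (fst x)) < T)}"

definition horoball_II :: "'a::group_add set \<Rightarrow> 'b::group_add set \<Rightarrow> (nat \<Rightarrow> nat) \<Rightarrow> (nat \<Rightarrow> nat)
    \<Rightarrow> ('a, 'b) pset \<Rightarrow> bool" where
  "horoball_II S S' f r \<xi> \<longleftrightarrow>
     (\<xi> \<in> Cspace S S' \<and>
      (\<exists>nk :: nat \<Rightarrow> nat. \<exists>xk :: nat \<Rightarrow> 'a \<times> 'b.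
          filterlim nk at_top sequentially \<and>
          filterlim (\<lambda>k. word_dist S (fst (xk k)) 0) at_top sequentially \<and>
          filterlim (\<lambda>k. word_dist S' (snd (xk k)) 0) at_top sequentially \<and>
          ((\<lambda>k. pdiam S S' f r (nk k) (xk k)) \<longlonglongrightarrow> \<xi>)))
   \<or> (\<exists>\<theta> \<theta>'. \<theta> \<in> bdry S \<and> \<theta>' \<in> bdry S' \<and>
          \<xi> = ((\<lambda>_. True), (\<lambda>y. \<theta> (fst y) + \<theta>' (snd y) / cexp S S')))"

text \<open>A discrete multiset in C(G'') is given by its multiplicity function mu,
  supported in C(G''), such that each y lies in B for only finitely many elements.\<close>
definition disc_sets :: "'a::group_add set \<Rightarrow> 'b::group_add set \<Rightarrow> (('a, 'b) pset \<Rightarrow> nat) set" where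
  "disc_sets S S' = {\<mu>. (\<forall>\<xi>. \<mu> \<xi> \<noteq> 0 \<longrightarrow> \<xi> \<in> Cspace S S') \<and>
                       (\<forall>y. finite {\<xi>. \<mu> \<xi> \<noteq> 0 \<and> fst \<xi> y})}"

definition Cc_funs :: "'a::group_add set \<Rightarrow> 'b::group_add set \<Rightarrow> (('a, 'b) pset \<Rightarrow> real) set" where
  "Cc_funs S S' = {g. continuous_map (Ctop S S') euclideanreal g \<and>
      (\<exists>K. compactin (Ctop S S') K \<and> (\<forall>\<xi>\<in>Cspace S S' - K. g \<xi> = 0))}"

definition cm_integral :: "('c \<Rightarrow> real) \<Rightarrow> ('c \<Rightarrow> nat) \<Rightarrow> real" where
  "cm_integral g \<mu> = (\<Sum>\<xi>\<in>{\<xi>. \<mu> \<xi> \<noteq> 0 \<and> g \<xi> \<noteq> 0}. real (\<mu> \<xi>) * g \<xi>)"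

definition vague_top :: "'a::group_add set \<Rightarrow> 'b::group_add set \<Rightarrow> (('a, 'b) pset \<Rightarrow> nat) topology" where
  "vague_top S S' = subtopology
     (topology_generated_by {{\<mu>. cm_integral g \<mu> \<in> U} | g U. g \<in> Cc_funs S S' \<and> open U})
     (disc_sets S S')"

definition borel_of :: "'c topology \<Rightarrow> 'c measure" where
  "borel_of X = sigma (topspace X) {U. openin X U}"

definition weak_conv_top :: "'c topology \<Rightarrow> (nat \<Rightarrow> 'c measure) \<Rightarrow> 'c measure \<Rightarrow> bool" where
  "weak_conv_top X P Q \<longleftrightarrow>
     (\<forall>F. continuous_map X euclideanreal F \<and> bounded (F ` topspace X) \<longrightarrow>
          (\<lambda>k. integral\<^sup>L (P k) F) \<longlonglongrightarrow> integral\<^sup>L Q F)"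

end

theory Submission
  imports Defs
begin


lemma wl_ex:
  assumes "fin_generating S"
  shows "\<exists>ws. length ws = word_len S g \<and> set ws \<subseteq> S \<union> uminus ` S \<and> sum_list ws = g"
proof -
  from assms obtain ws where "set ws \<subseteq> S \<union> uminus ` S \<and> sum_list ws = g"
    unfolding fin_generating_def by blast
  then have "\<exists>n ws. length ws = n \<and> set ws \<subseteq> S \<union> uminus ` S \<and> sum_list ws = g" by blast
  then show ?thesis unfolding word_len_def by (rule LeastI_ex)
qed

lemma wl_le:
  assumes "set ws \<subseteq> S \<union> uminus ` S" "sum_list ws = g"
  shows "word_len S g \<le> length ws"
  unfolding word_len_def using assms by (intro Least_le) blast

lemma wl_add:
  assumes "fin_generating S"
  shows "word_len S (a + b) \<le> word_len S a + word_len S b"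
proof -
  obtain u where u: "length u = word_len S a" "set u \<subseteq> S \<union> uminus ` S" "sum_list u = a"
    using wl_ex[OF assms] by blast
  obtain v where v: "length v = word_len S b" "set v \<subseteq> S \<union> uminus ` S" "sum_list v = b"
    using wl_ex[OF assms] by blast
  have "word_len S (a + b) \<le> length (u @ v)"
    by (rule wl_le) (use u v in auto)
  then show ?thesis using u v by simp
qed

lemma sum_list_neg_rev:
  fixes ws :: "'a::group_add list"
  shows "sum_list (map uminus (rev ws)) = - sum_list ws"
  by (induction ws) (auto simp: minus_add)

lemma wl_neg_le:
  assumes "fin_generating S"
  shows "word_len S (- a) \<le> word_len S a"
proof -
  obtain u where u: "length u = word_len S a" "set u \<subseteq> S \<union> uminus ` S" "sum_list u = a"
    using wl_ex[OF assms] by blast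
  have "word_len S (- a) \<le> length (map uminus (rev u))"
    by (rule wl_le) (use u in \<open>auto simp: sum_list_neg_rev\<close>)
  then show ?thesis using u by simp
qed

lemma wl_neg:
  assumes "fin_generating S"
  shows "word_len S (- a) = word_len S a"
  using wl_neg_le[OF assms, of a] wl_neg_le[OF assms, of "-a"] by simp

lemma wd_tri:
  assumes "fin_generating S"
  shows "word_dist S x z \<le> word_dist S x y + word_dist S y z"
proof -
  have "- x + z = (- x + y) + (- y + z)" by (simp add: add.assoc)
  then show ?thesis unfolding word_dist_def using wl_add[OF assms, of "- x + y" "- y + z"] by simp
qed

lemma wd_sym:
  assumes "fin_generating S"
  shows "word_dist S x y = word_dist S y x"
proof -
  have "- (- x + y) = - y + x" by (simp add: minus_add)
  then show ?thesis unfolding word_dist_def using wl_neg[OF assms, of "- x + y"] by simp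
qed

lemma countable_gen:
  fixes S :: "'a::group_add set"
  assumes "fin_generating S"
  shows "countable (UNIV :: 'a::group_add set)"
proof -
  have e: "(UNIV::'a set) = sum_list ` lists (S \<union> uminus ` S)"
    using assms unfolding fin_generating_def by (auto simp: image_iff lists_eq_set) (metis subset_code(1))
  have c: "countable (lists (S \<union> uminus ` S))"
    using assms unfolding fin_generating_def by (intro countable_lists countable_finite) auto
  show ?thesis by (subst e) (rule countable_image[OF c])
qed



definition tf :: "(nat \<Rightarrow> 'p) \<Rightarrow> nat \<Rightarrow> nat set \<Rightarrow> (nat \<Rightarrow> real) \<Rightarrow> real
     \<Rightarrow> (('p \<Rightarrow> bool) \<times> ('p \<Rightarrow> real)) \<Rightarrow> real" where
  "tf E m bs q e \<xi> = (\<Prod>k\<le>m. if fst \<xi> (E k) = (k \<in> bs) then 1 else 0) *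
      max 0 (1 - (\<Sum>k\<le>m. \<bar>snd \<xi> (E k) - q k\<bar>) / e)"

lemma prod_ind_eq:
  "(\<Prod>k\<le>(m::nat). if P k then (1::real) else 0) = (if (\<forall>k\<le>m. P k) then 1 else 0)"
  by (induction m) (auto simp: le_Suc_eq)

lemma tf_alt: "tf E m bs q e \<xi> = (if (\<forall>k\<le>m. fst \<xi> (E k) = (k \<in> bs)) then
      max 0 (1 - (\<Sum>k\<le>m. \<bar>snd \<xi> (E k) - q k\<bar>) / e) else 0)"
  unfolding tf_def prod_ind_eq by auto

lemma tf_nonneg: "tf E m bs q e \<xi> \<ge> 0"
  unfolding tf_alt by auto

lemma tf_posD:
  assumes "tf E m bs q e \<xi> > 0" "e > 0"
  shows "\<forall>k\<le>m. fst \<xi> (E k) = (k \<in> bs)" "(\<Sum>k\<le>m. \<bar>snd \<xi> (E k) - q k\<bar>) < e"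
proof -
  show 1: "\<forall>k\<le>m. fst \<xi> (E k) = (k \<in> bs)" using assms unfolding tf_alt by (auto split: if_splits)
  then have "max 0 (1 - (\<Sum>k\<le>m. \<bar>snd \<xi> (E k) - q k\<bar>) / e) > 0" using assms(1) unfolding tf_alt by simp
  then have "(\<Sum>k\<le>m. \<bar>snd \<xi> (E k) - q k\<bar>) / e < 1" by linarith
  then show "(\<Sum>k\<le>m. \<bar>snd \<xi> (E k) - q k\<bar>) < e" using assms(2) by (simp add: divide_less_eq)
qed

lemma tf_posI:
  assumes "\<forall>k\<le>m. fst \<xi> (E k) = (k \<in> bs)" "(\<Sum>k\<le>m. \<bar>snd \<xi> (E k) - q k\<bar>) < e" "e > 0"
  shows "tf E m bs q e \<xi> > 0"
  using assms unfolding tf_alt by (auto simp: field_simps)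

lemma tf_at_center:
  assumes "\<forall>k\<le>m. fst \<xi> (E k) = (k \<in> bs)" "\<forall>k\<le>m. q k = snd \<xi> (E k)" "e > 0"
  shows "tf E m bs q e \<xi> = 1"
  using assms unfolding tf_alt by auto

lemma cont_fst_app: "continuous_on UNIV (\<lambda>\<xi>::('p \<Rightarrow> 'b::topological_space) \<times> 'c::topological_space. fst \<xi> y)"
  by (rule continuous_on_compose2[OF continuous_on_product_coordinates continuous_on_fst]) auto

lemma cont_snd_app: "continuous_on UNIV (\<lambda>\<xi>::'c::topological_space \<times> ('p \<Rightarrow> 'b::topological_space). snd \<xi> y)"
  by (rule continuous_on_compose2[OF continuous_on_product_coordinates continuous_on_snd]) auto

lemma tf_cont:
  fixes E :: "nat \<Rightarrow> 'p"
  shows "continuous_on UNIV (tf E m bs q e)"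
proof -
  have c1: "continuous_on UNIV (\<lambda>\<xi>::('p \<Rightarrow> bool) \<times> ('p \<Rightarrow> real). if fst \<xi> (E k) = (k \<in> bs) then (1::real) else 0)" for k
  proof -
    have "continuous_on UNIV (\<lambda>b::bool. if b = (k \<in> bs) then (1::real) else 0)" by simp
    then show ?thesis
      by (rule continuous_on_compose2[OF _ cont_fst_app]) auto
  qed
  show ?thesis unfolding tf_def[abs_def] divide_inverse
    by (intro continuous_intros c1 cont_snd_app)
qed



definition Rb :: "'a::group_add set \<Rightarrow> 'b::group_add set \<Rightarrow> ('a \<times> 'b) \<Rightarrow> real" where
  "Rb S S' z = real (word_dist S 0 (fst z)) + real (word_dist S' 0 (snd z)) / \<bar>cexp S S'\<bar>"

lemma wd_diff:
  assumes "fin_generating S"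
  shows "\<bar>real (word_dist S x z) - real (word_dist S x 0)\<bar> \<le> real (word_dist S 0 z)"
proof -
  have "word_dist S x z \<le> word_dist S x 0 + word_dist S 0 z" by (rule wd_tri[OF assms])
  moreover have "word_dist S x 0 \<le> word_dist S x z + word_dist S z 0" by (rule wd_tri[OF assms])
  moreover have "word_dist S z 0 = word_dist S 0 z" by (rule wd_sym[OF assms])
  ultimately show ?thesis by linarith
qed

lemma horo_bound:
  assumes "fin_generating S" "fin_generating S'"
  shows "\<bar>horo_fun (rho S S') (0, 0) x z\<bar> \<le> Rb S S' z"
proof -
  define c where "c = cexp S S'"
  have h: "horo_fun (rho S S') (0, 0) x z =
     (real (word_dist S (fst x) (fst z)) - real (word_dist S (fst x) 0)) +
     (real (word_dist S' (snd x) (snd z)) - real (word_dist S' (snd x) 0)) / c"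
    unfolding horo_fun_def rho_def c_def by (simp add: diff_divide_distrib)
  have a1: "\<bar>real (word_dist S (fst x) (fst z)) - real (word_dist S (fst x) 0)\<bar> \<le> real (word_dist S 0 (fst z))"
    by (rule wd_diff[OF assms(1)])
  have a2: "\<bar>real (word_dist S' (snd x) (snd z)) - real (word_dist S' (snd x) 0)\<bar> \<le> real (word_dist S' 0 (snd z))"
    by (rule wd_diff[OF assms(2)])
  have a3: "\<bar>(real (word_dist S' (snd x) (snd z)) - real (word_dist S' (snd x) 0)) / c\<bar>
      \<le> real (word_dist S' 0 (snd z)) / \<bar>c\<bar>"
    using a2 by (simp add: abs_divide divide_right_mono)
  show ?thesis unfolding h Rb_def c_def[symmetric] using a1 a3 abs_triangle_ineq[of
      "real (word_dist S (fst x) (fst z)) - real (word_dist S (fst x) 0)"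
      "(real (word_dist S' (snd x) (snd z)) - real (word_dist S' (snd x) 0)) / c"] by linarith
qed

lemma compact_box_fun: "compact {\<theta>::'p \<Rightarrow> real. \<forall>z. \<theta> z \<in> {a z..b z}}"
proof -
  have "compactin (product_topology (\<lambda>_. euclidean) UNIV) (PiE UNIV (\<lambda>z. {a z..b z}))"
    by (simp add: compactin_PiE)
  moreover have "PiE UNIV (\<lambda>z. {a z..b z}) = {\<theta>::'p \<Rightarrow> real. \<forall>z. \<theta> z \<in> {a z..b z}}"
    by (auto simp: PiE_UNIV_domain Pi_iff)
  ultimately show ?thesis by (simp add: euclidean_product_topology)
qed

lemma compact_bool_fun: "compact {B::'p \<Rightarrow> bool. B y}"
proof -
  have "compactin (product_topology (\<lambda>_. euclidean) UNIV) (PiE UNIV (\<lambda>z. if z = y then {True} else UNIV))"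
    by (simp add: compactin_PiE finite_imp_compact)
  moreover have "PiE UNIV (\<lambda>z. if z = y then {True} else UNIV) = {B::'p \<Rightarrow> bool. B y}"
    by (auto simp: PiE_UNIV_domain Pi_iff split: if_splits)
  ultimately show ?thesis by (simp add: euclidean_product_topology)
qed

lemma closed_box_fun: "closed {\<theta>::'p \<Rightarrow> real. \<forall>z. \<theta> z \<in> {a z..b z}}"
proof -
  have "{\<theta>::'p \<Rightarrow> real. \<forall>z. \<theta> z \<in> {a z..b z}} = (\<Inter>z. (\<lambda>\<theta>. \<theta> z) -` {a z..b z})" by auto
  moreover have "closed ((\<lambda>\<theta>::'p \<Rightarrow> real. \<theta> z) -` {a z..b z})" for z
    by (rule closed_vimage) auto
  ultimately show ?thesis by auto
qed

lemma compact_horo: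
  assumes "fin_generating S" "fin_generating S'"
  shows "compact (horo_closure (rho S S') (0, 0))"
proof -
  let ?B = "{\<theta>::('a \<times> 'b) \<Rightarrow> real. \<forall>z. \<theta> z \<in> {- Rb S S' z..Rb S S' z}}"
  have "\<And>x z. horo_fun (rho S S') (0, 0) x z \<in> {- Rb S S' z..Rb S S' z}"
    using horo_bound[OF assms] by (metis abs_le_iff atLeastAtMost_iff minus_le_iff)
  then have "range (horo_fun (rho S S') (0, 0)) \<subseteq> ?B" by auto
  then have "horo_closure (rho S S') (0, 0) \<subseteq> ?B"
    unfolding horo_closure_def by (intro closure_minimal closed_box_fun)
  then have "horo_closure (rho S S') (0, 0) = horo_closure (rho S S') (0, 0) \<inter> ?B" by blast
  moreover have "compact (horo_closure (rho S S') (0, 0) \<inter> ?B)"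
    unfolding horo_closure_def by (intro closed_Int_compact compact_box_fun) auto
  ultimately show ?thesis by simp
qed

lemma tf_Cc:
  fixes S :: "'a::group_add set" and S' :: "'b::group_add set" and E :: "nat \<Rightarrow> 'a \<times> 'b"
  assumes "fin_generating S" "fin_generating S'" "e > 0" "k0 \<le> m" "k0 \<in> bs"
  shows "tf E m bs q e \<in> Cc_funs S S'"
proof -
  have "continuous_map euclidean euclideanreal (tf E m bs q e)"
    using tf_cont[of E m bs q e] by (simp add: continuous_map_iff_continuous)
  then have c: "continuous_map (Ctop S S') euclideanreal (tf E m bs q e)"
    unfolding Ctop_def by (rule continuous_map_from_subtopology)
  define K where "K = {B::('a \<times> 'b) \<Rightarrow> bool. B (E k0)} \<times> horo_closure (rho S S') (0, 0)"
  have "compact K" unfolding K_def by (intro compact_Times compact_bool_fun compact_horo assms)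
  moreover have "K \<subseteq> Cspace S S'"
  proof
    fix \<xi> assume "\<xi> \<in> K"
    then have "fst \<xi> (E k0)" "snd \<xi> \<in> horo_closure (rho S S') (0, 0)" by (auto simp: K_def)
    then show "\<xi> \<in> Cspace S S'" unfolding Cspace_def by blast
  qed
  ultimately have "compactin (Ctop S S') K" unfolding Ctop_def by (simp add: compactin_subtopology)
  moreover have "\<forall>\<xi>\<in>Cspace S S' - K. tf E m bs q e \<xi> = 0"
  proof
    fix \<xi> assume \<xi>: "\<xi> \<in> Cspace S S' - K"
    show "tf E m bs q e \<xi> = 0"
    proof (rule ccontr)
      assume "tf E m bs q e \<xi> \<noteq> 0"
      then have "tf E m bs q e \<xi> > 0" using tf_nonneg[of E m bs q e \<xi>] by linarith
      then have "fst \<xi> (E k0)" using tf_posD(1)[OF _ assms(3)] assms(4,5) by blast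
      then show False using \<xi> unfolding K_def Cspace_def by (cases \<xi>) auto
    qed
  qed
  ultimately show ?thesis unfolding Cc_funs_def using c by blast
qed



lemma borel_of_pow: "{U. openin X U} \<subseteq> Pow (topspace X)"
  by (auto dest: openin_subset)

lemma space_borel_of: "space (borel_of X) = topspace X"
  unfolding borel_of_def by (rule space_measure_of[OF borel_of_pow])

lemma sets_borel_of_open: "openin X U \<Longrightarrow> U \<in> sets (borel_of X)"
  unfolding borel_of_def sets_measure_of[OF borel_of_pow] by (auto intro: sigma_sets.Basic)

lemma cont_borel_measurable:
  assumes "continuous_map X euclideanreal F"
  shows "F \<in> borel_measurable (borel_of X)"
proof (rule borel_measurableI)
  fix U :: "real set" assume "open U"
  then have "openin X {x \<in> topspace X. F x \<in> U}"
    using assms unfolding continuous_map by auto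
  moreover have "F -` U \<inter> space (borel_of X) = {x \<in> topspace X. F x \<in> U}"
    by (auto simp: space_borel_of)
  ultimately show "F -` U \<inter> space (borel_of X) \<in> sets (borel_of X)"
    by (simp add: sets_borel_of_open)
qed

lemma zero_Cc: "(\<lambda>_. 0) \<in> Cc_funs S S'"
  unfolding Cc_funs_def by (auto intro!: exI[of _ "{}"])

lemma topspace_vague: "topspace (vague_top S S') = disc_sets S S'"
proof -
  have "UNIV \<in> {{\<mu>. cm_integral g \<mu> \<in> U} | g U. g \<in> Cc_funs S S' \<and> open U}"
    using zero_Cc by (auto intro!: exI[of _ "\<lambda>_. 0"] exI[of _ UNIV])
  then show ?thesis unfolding vague_top_def by auto
qed

lemma cm_cont:
  assumes "g \<in> Cc_funs S S'"
  shows "continuous_map (vague_top S S') euclideanreal (cm_integral g)"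
  unfolding continuous_map
proof safe
  fix U :: "real set" assume "openin euclideanreal U"
  then have "open U" by simp
  then have "openin (topology_generated_by {{\<mu>. cm_integral g \<mu> \<in> U} | g U. g \<in> Cc_funs S S' \<and> open U})
              {\<mu>. cm_integral g \<mu> \<in> U}"
    using assms by (intro topology_generated_by_Basis) blast
  moreover have "{x \<in> topspace (vague_top S S'). cm_integral g x \<in> U} = {\<mu>. cm_integral g \<mu> \<in> U} \<inter> disc_sets S S'"
    by (auto simp: topspace_vague)
  ultimately show "openin (vague_top S S') {x \<in> topspace (vague_top S S'). cm_integral g x \<in> U}"
    unfolding vague_top_def by (auto simp: openin_subtopology)
qed auto

lemma cm_nonneg:
  assumes "\<And>\<xi>. g \<xi> \<ge> 0"
  shows "cm_integral g \<mu> \<ge> 0"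
  unfolding cm_integral_def using assms by (intro sum_nonneg) auto

lemma cm_pos_ex:
  assumes "cm_integral g \<mu> > 0"
  shows "\<exists>\<xi>. \<mu> \<xi> \<noteq> 0 \<and> g \<xi> \<noteq> 0"
proof (rule ccontr)
  assume "\<not> ?thesis"
  then have e: "{\<xi>. \<mu> \<xi> \<noteq> 0 \<and> g \<xi> \<noteq> 0} = {}" by auto
  from assms show False unfolding cm_integral_def e by simp
qed

lemma cm_ge_term:
  assumes "\<And>\<xi>. g \<xi> \<ge> 0" "finite {\<xi>. \<mu> \<xi> \<noteq> 0 \<and> g \<xi> \<noteq> 0}"
  shows "cm_integral g \<mu> \<ge> real (\<mu> \<xi>) * g \<xi>"
proof (cases "\<mu> \<xi> \<noteq> 0 \<and> g \<xi> \<noteq> 0")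
  case True
  then show ?thesis unfolding cm_integral_def
    by (intro member_le_sum assms) (auto intro: mult_nonneg_nonneg assms)
next
  case False
  then show ?thesis using cm_nonneg[OF assms(1)] by auto
qed



lemma small_inv:
  assumes "(\<delta>::real) > 0"
  shows "\<exists>N. \<forall>j\<ge>N. 1 / (real j + 1) < \<delta>"
proof -
  obtain n where n: "n \<noteq> 0" "inverse (real n) < \<delta>" using real_arch_inverse assms by blast
  have "1 / (real j + 1) < \<delta>" if "j \<ge> n" for j
  proof -
    have "1 / (real j + 1) \<le> inverse (real n)"
      using that n by (simp add: divide_simps)
    then show ?thesis using n by linarith
  qed
  then show ?thesis by blast
qed

definition gsep :: "(nat \<Rightarrow> 'p) \<Rightarrow> nat \<Rightarrow> (('p \<Rightarrow> bool) \<times> ('p \<Rightarrow> real)) \<Rightarrow> nat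
     \<Rightarrow> (('p \<Rightarrow> bool) \<times> ('p \<Rightarrow> real)) \<Rightarrow> real" where
  "gsep E k0 \<xi> j = tf E (j + k0) {k. fst \<xi> (E k)} (\<lambda>k. snd \<xi> (E k)) (1 / (real j + 1))"

lemma gsep_posD:
  assumes "gsep E k0 \<xi> j \<xi>' \<noteq> 0"
  shows "\<forall>k\<le>j + k0. fst \<xi>' (E k) = fst \<xi> (E k)"
    "(\<Sum>i\<le>j + k0. \<bar>snd \<xi>' (E i) - snd \<xi> (E i)\<bar>) < 1 / (real j + 1)"
proof -
  have p: "tf E (j + k0) {k. fst \<xi> (E k)} (\<lambda>k. snd \<xi> (E k)) (1 / (real j + 1)) \<xi>' > 0"
    using assms tf_nonneg[of E "j + k0" "{k. fst \<xi> (E k)}" "\<lambda>k. snd \<xi> (E k)" "1 / (real j + 1)" \<xi>']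
    unfolding gsep_def by linarith
  have e: "1 / (real j + 1) > 0" by simp
  show "\<forall>k\<le>j + k0. fst \<xi>' (E k) = fst \<xi> (E k)" using tf_posD(1)[OF p e] by simp
  show "(\<Sum>i\<le>j + k0. \<bar>snd \<xi>' (E i) - snd \<xi> (E i)\<bar>) < 1 / (real j + 1)" using tf_posD(2)[OF p e] by simp
qed

lemma gsep_sep:
  assumes "surj E" "\<xi>' \<noteq> \<xi>"
  shows "eventually (\<lambda>j. gsep E k0 \<xi> j \<xi>' = 0) sequentially"
proof -
  have "\<exists>y. fst \<xi>' y \<noteq> fst \<xi> y \<or> snd \<xi>' y \<noteq> snd \<xi> y"
  proof (rule ccontr)
    assume "\<not> ?thesis"
    then have "fst \<xi>' = fst \<xi>" "snd \<xi>' = snd \<xi>" by auto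
    then show False using assms(2) by (simp add: prod_eq_iff)
  qed
  then obtain y where y: "fst \<xi>' y \<noteq> fst \<xi> y \<or> snd \<xi>' y \<noteq> snd \<xi> y" by blast
  obtain k where "y = E k" using surjD[OF assms(1)] by blast
  with y have k: "fst \<xi>' (E k) \<noteq> fst \<xi> (E k) \<or> snd \<xi>' (E k) \<noteq> snd \<xi> (E k)" by simp
  show ?thesis
  proof (cases "fst \<xi>' (E k) \<noteq> fst \<xi> (E k)")
    case True
    have "gsep E k0 \<xi> j \<xi>' = 0" if "j \<ge> k" for j
    proof (rule ccontr)
      assume "gsep E k0 \<xi> j \<xi>' \<noteq> 0"
      from gsep_posD(1)[OF this] that have "fst \<xi>' (E k) = fst \<xi> (E k)" by simp
      then show False using True by simp
    qed
    then show ?thesis unfolding eventually_sequentially by blast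
  next
    case False
    then have d: "\<bar>snd \<xi>' (E k) - snd \<xi> (E k)\<bar> > 0" using k by auto
    obtain N where N: "\<forall>j\<ge>N. 1 / (real j + 1) < \<bar>snd \<xi>' (E k) - snd \<xi> (E k)\<bar>"
      using small_inv[OF d] by blast
    have "gsep E k0 \<xi> j \<xi>' = 0" if "j \<ge> max k N" for j
    proof (rule ccontr)
      assume "gsep E k0 \<xi> j \<xi>' \<noteq> 0"
      from gsep_posD(2)[OF this] have s: "(\<Sum>i\<le>j + k0. \<bar>snd \<xi>' (E i) - snd \<xi> (E i)\<bar>) < 1 / (real j + 1)" .
      have "\<bar>snd \<xi>' (E k) - snd \<xi> (E k)\<bar> \<le> (\<Sum>i\<le>j + k0. \<bar>snd \<xi>' (E i) - snd \<xi> (E i)\<bar>)"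
        by (rule member_le_sum) (use that in auto)
      moreover have "1 / (real j + 1) < \<bar>snd \<xi>' (E k) - snd \<xi> (E k)\<bar>" using N that by simp
      ultimately show False using s by linarith
    qed
    then show ?thesis unfolding eventually_sequentially by blast
  qed
qed

lemma gsep_Cc:
  assumes "fin_generating S" "fin_generating S'" "fst \<xi> (E k0)"
  shows "gsep E k0 \<xi> j \<in> Cc_funs S S'"
  unfolding gsep_def by (rule tf_Cc[OF assms(1,2), of _ k0]) (use assms(3) in auto)

lemma gsep_pos2: "fst \<xi> (E k0) \<Longrightarrow> gsep E k0 \<xi> j \<xi>' \<noteq> 0 \<Longrightarrow> fst \<xi>' (E k0)"
  using gsep_posD(1)[of E k0 \<xi> j \<xi>'] by simp

lemma gsep_center: "gsep E k0 \<xi> j \<xi> = 1"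
  unfolding gsep_def by (rule tf_at_center) auto

lemma atom_set_eq:
  assumes "surj E" "fst \<xi> (E k0)"
  shows "{\<mu> \<in> disc_sets S S'. \<mu> \<xi> \<noteq> 0} = (\<Inter>j. {\<mu> \<in> disc_sets S S'. cm_integral (gsep E k0 \<xi> j) \<mu> > 1/2})"
proof (intro equalityI subsetI)
  fix \<mu> assume \<mu>: "\<mu> \<in> {\<mu> \<in> disc_sets S S'. \<mu> \<xi> \<noteq> 0}"
  have "\<forall>y. finite {\<xi>'. \<mu> \<xi>' \<noteq> 0 \<and> fst \<xi>' y}" using \<mu> unfolding disc_sets_def by blast
  then have fin: "finite {\<xi>'. \<mu> \<xi>' \<noteq> 0 \<and> fst \<xi>' (E k0)}" by blast
  show "\<mu> \<in> (\<Inter>j. {\<mu> \<in> disc_sets S S'. cm_integral (gsep E k0 \<xi> j) \<mu> > 1/2})"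
  proof safe
    fix j
    have fin2: "finite {\<xi>'. \<mu> \<xi>' \<noteq> 0 \<and> gsep E k0 \<xi> j \<xi>' \<noteq> 0}"
      by (rule finite_subset[OF _ fin]) (use gsep_pos2[of \<xi> E k0, OF assms(2)] in auto)
    have "cm_integral (gsep E k0 \<xi> j) \<mu> \<ge> real (\<mu> \<xi>) * gsep E k0 \<xi> j \<xi>"
      by (rule cm_ge_term[OF _ fin2]) (simp add: gsep_def tf_nonneg)
    then show "cm_integral (gsep E k0 \<xi> j) \<mu> > 1/2" using \<mu> by (simp add: gsep_center)
  qed (use \<mu> in auto)
next
  fix \<mu> assume \<mu>: "\<mu> \<in> (\<Inter>j. {\<mu> \<in> disc_sets S S'. cm_integral (gsep E k0 \<xi> j) \<mu> > 1/2})"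
  then have disc: "\<mu> \<in> disc_sets S S'" by auto
  show "\<mu> \<in> {\<mu> \<in> disc_sets S S'. \<mu> \<xi> \<noteq> 0}"
  proof (rule ccontr)
    assume "\<not> ?thesis"
    then have z: "\<mu> \<xi> = 0" using disc by auto
    define F where "F = {\<xi>'. \<mu> \<xi>' \<noteq> 0 \<and> fst \<xi>' (E k0)}"
    have "\<forall>y. finite {\<xi>'. \<mu> \<xi>' \<noteq> 0 \<and> fst \<xi>' y}" using disc unfolding disc_sets_def by blast
    then have fin: "finite F" unfolding F_def by blast
    have "\<forall>\<xi>'\<in>F. eventually (\<lambda>j. gsep E k0 \<xi> j \<xi>' = 0) sequentially"
    proof
      fix \<xi>' assume "\<xi>' \<in> F"
      then have "\<xi>' \<noteq> \<xi>" using z unfolding F_def by auto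
      then show "eventually (\<lambda>j. gsep E k0 \<xi> j \<xi>' = 0) sequentially" by (rule gsep_sep[OF assms(1)])
    qed
    then have "eventually (\<lambda>j. \<forall>\<xi>'\<in>F. gsep E k0 \<xi> j \<xi>' = 0) sequentially"
      by (rule eventually_ball_finite[OF fin])
    then obtain j where j: "\<forall>\<xi>'\<in>F. gsep E k0 \<xi> j \<xi>' = 0" unfolding eventually_sequentially by blast
    have e: "{\<xi>'. \<mu> \<xi>' \<noteq> 0 \<and> gsep E k0 \<xi> j \<xi>' \<noteq> 0} = {}"
      using j gsep_pos2[of \<xi> E k0, OF assms(2)] unfolding F_def by blast
    have "cm_integral (gsep E k0 \<xi> j) \<mu> = 0" unfolding cm_integral_def e by simp
    moreover have "cm_integral (gsep E k0 \<xi> j) \<mu> > 1/2" using \<mu> by blast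
    ultimately show False by simp
  qed
qed



lemma wd_self: "word_dist S x x = 0"
proof -
  have "word_len S 0 \<le> length ([] :: 'a list)" by (rule wl_le) auto
  then show ?thesis unfolding word_dist_def by simp
qed

lemma pdiam_Cspace: "pdiam S S' f r n x \<in> Cspace S S'"
proof -
  have "diamond S S' f r n x x" unfolding diamond_def
    by (rule exI[of _ "r n"]) (simp add: wd_self)
  moreover have "horo_fun (rho S S') (0, 0) x \<in> horo_closure (rho S S') (0, 0)"
    unfolding horo_closure_def by (rule set_mp[OF closure_subset]) auto
  ultimately have "(\<exists>y. fst (pdiam S S' f r n x) y) \<and> snd (pdiam S S' f r n x) \<in> horo_closure (rho S S') (0, 0)"
    unfolding pdiam_def fst_conv snd_conv by blast
  then show ?thesis unfolding Cspace_def by blast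
qed

lemma meas_atom:
  fixes S :: "'a::group_add set" and S' :: "'b::group_add set" and E :: "nat \<Rightarrow> 'a \<times> 'b"
  assumes "fin_generating S" "fin_generating S'" "surj E" "\<xi> \<in> Cspace S S'"
  shows "{\<mu> \<in> disc_sets S S'. \<mu> \<xi> \<noteq> 0} \<in> sets (borel_of (vague_top S S'))"
proof -
  obtain y where "fst \<xi> y" using assms(4) unfolding Cspace_def by auto
  moreover obtain k0 where "y = E k0" using surjD[OF assms(3)] by blast
  ultimately have k0: "fst \<xi> (E k0)" by simp
  have op: "{\<mu> \<in> disc_sets S S'. cm_integral (gsep E k0 \<xi> j) \<mu> > 1/2} \<in> sets (borel_of (vague_top S S'))" for j
  proof -
    have "continuous_map (vague_top S S') euclideanreal (cm_integral (gsep E k0 \<xi> j))"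
      by (rule cm_cont[OF gsep_Cc[of S S' \<xi> E k0, OF assms(1,2) k0]])
    then have "openin (vague_top S S') {x \<in> topspace (vague_top S S'). cm_integral (gsep E k0 \<xi> j) x \<in> {1/2<..}}"
      unfolding continuous_map by (meson open_greaterThan open_openin)
    then have "{x \<in> topspace (vague_top S S'). cm_integral (gsep E k0 \<xi> j) x \<in> {1/2<..}} \<in> sets (borel_of (vague_top S S'))"
      by (rule sets_borel_of_open)
    moreover have "{x \<in> topspace (vague_top S S'). cm_integral (gsep E k0 \<xi> j) x \<in> {1/2<..}}
       = {\<mu> \<in> disc_sets S S'. cm_integral (gsep E k0 \<xi> j) \<mu> > 1/2}" by (auto simp: topspace_vague)
    ultimately show ?thesis by simp
  qed
  have "(\<Inter>j\<in>UNIV. {\<mu> \<in> disc_sets S S'. cm_integral (gsep E k0 \<xi> j) \<mu> > 1/2}) \<in> sets (borel_of (vague_top S S'))"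
    by (rule sets.countable_INT') (use op in auto)
  then show ?thesis using atom_set_eq[OF assms(3) k0, of S S'] by simp
qed

lemma meas_atoms:
  fixes S :: "'a::group_add set" and S' :: "'b::group_add set" and E :: "nat \<Rightarrow> 'a \<times> 'b"
  assumes "fin_generating S" "fin_generating S'" "surj E" "X \<subseteq> Cspace S S'" "countable X"
  shows "{\<mu> \<in> disc_sets S S'. \<exists>\<xi>\<in>X. \<mu> \<xi> \<noteq> 0} \<in> sets (borel_of (vague_top S S'))"
proof -
  have "{\<mu> \<in> disc_sets S S'. \<exists>\<xi>\<in>X. \<mu> \<xi> \<noteq> 0} = (\<Union>\<xi>\<in>X. {\<mu> \<in> disc_sets S S'. \<mu> \<xi> \<noteq> 0})" by auto
  also have "\<dots> \<in> sets (borel_of (vague_top S S'))"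
    by (rule sets.countable_UN'') (use assms meas_atom[OF assms(1-3)] in auto)
  finally show ?thesis .
qed

lemma countable_pairs:
  fixes S :: "'a::group_add set" and S' :: "'b::group_add set"
  assumes "fin_generating S" "fin_generating S'"
  shows "countable (UNIV :: ('a \<times> 'b) set)"
proof -
  have "countable ((UNIV :: 'a set) \<times> (UNIV :: 'b set))"
    using countable_gen[OF assms(1)] countable_gen[OF assms(2)] by (rule countable_SIGMA)
  then show ?thesis by simp
qed



lemma AE_from_cert:
  fixes S :: "'a::group_add set" and S' :: "'b::group_add set"
    and f r :: "nat \<Rightarrow> nat"
    and P :: "nat \<Rightarrow> (('a, 'b) pset \<Rightarrow> nat) measure"
    and Q :: "(('a, 'b) pset \<Rightarrow> nat) measure"
    and s :: "nat \<Rightarrow> nat" and E :: "nat \<Rightarrow> 'a \<times> 'b" and g :: "('a, 'b) pset \<Rightarrow> real"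
  assumes fg: "fin_generating S" "fin_generating S'" and surjE: "surj E"
    and Pprob: "\<And>n. prob_space (P n)"
    and Psets: "\<And>n. sets (P n) = sets (borel_of (vague_top S S'))"
    and PAE: "\<And>n. AE \<mu> in P n. \<forall>\<xi>. \<mu> \<xi> \<noteq> 0 \<longrightarrow> \<xi> \<in> range (pdiam S S' f r n)"
    and Plim: "\<And>T::real. (\<lambda>n. measure (P n) {\<mu> \<in> space (P n). \<exists>\<xi>\<in>A_set S S' f r n T. \<mu> \<xi> \<noteq> 0})
                    \<longlonglongrightarrow> 0"
    and Qprob: "prob_space Q" and Qsets: "sets Q = sets (borel_of (vague_top S S'))"
    and smono: "strict_mono s" and wc: "weak_conv_top (vague_top S S') (\<lambda>k. P (s k)) Q"
    and gCc: "g \<in> Cc_funs S S'" and gnn: "\<And>\<xi>. g \<xi> \<ge> 0"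
    and cert: "\<forall>n\<ge>N. \<forall>x. g (pdiam S S' f r n x) > 0 \<longrightarrow> pdiam S S' f r n x \<in> A_set S S' f r n T"
  shows "AE \<mu> in Q. cm_integral g \<mu> \<le> 0"
proof -
  define F where "F = (\<lambda>\<mu>. min 1 (max 0 (cm_integral g \<mu>)))"
  have F01: "0 \<le> F \<mu>" "F \<mu> \<le> 1" for \<mu> unfolding F_def by auto
  have Fc: "continuous_map (vague_top S S') euclideanreal F"
  proof -
    have h: "continuous_map euclideanreal euclideanreal (\<lambda>x::real. min 1 (max 0 x))"
      by (simp add: continuous_on_min continuous_on_max)
    show ?thesis unfolding F_def
      using continuous_map_compose[OF cm_cont[OF gCc] h] by (simp add: o_def)
  qed
  have Fb: "bounded (F ` topspace (vague_top S S'))"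
    by (rule bounded_subset[OF bounded_closed_interval[of 0 1]]) (auto simp: F01)
  have lim: "(\<lambda>k. integral\<^sup>L (P (s k)) F) \<longlonglongrightarrow> integral\<^sup>L Q F"
    using wc Fc Fb unfolding weak_conv_top_def by blast
  have Fm: "F \<in> borel_measurable (borel_of (vague_top S S'))" by (rule cont_borel_measurable[OF Fc])
  have FmP: "F \<in> borel_measurable (P n)" for n
    using Fm measurable_cong_sets[OF Psets refl] by blast
  have FmQ: "F \<in> borel_measurable Q"
    using Fm measurable_cong_sets[OF Qsets refl] by blast
  have intP: "integrable (P n) F" for n
  proof -
    interpret prob_space "P n" by (rule Pprob)
    show ?thesis by (rule integrable_const_bound[where B=1]) (auto simp: F01 FmP abs_le_iff intro: order_trans[OF _ F01(2)])
  qed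
  have intQ: "integrable Q F"
  proof -
    interpret prob_space Q by (rule Qprob)
    show ?thesis by (rule integrable_const_bound[where B=1]) (auto simp: F01 FmQ abs_le_iff intro: order_trans[OF _ F01(2)])
  qed
  define En where "En n = {\<mu> \<in> space (P n). \<exists>\<xi>\<in>A_set S S' f r n T. \<mu> \<xi> \<noteq> 0}" for n
  have spP: "space (P n) = disc_sets S S'" for n
    using sets_eq_imp_space_eq[OF Psets[of n]] by (simp add: space_borel_of topspace_vague)
  have En_sets: "En n \<in> sets (P n)" for n
  proof -
    have "A_set S S' f r n T \<subseteq> range (pdiam S S' f r n)" unfolding A_set_def by auto
    then have sub: "A_set S S' f r n T \<subseteq> Cspace S S'" using pdiam_Cspace by blast
    have "countable (range (pdiam S S' f r n))"
      using countable_pairs[OF fg] by (rule countable_image)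
    then have cnt: "countable (A_set S S' f r n T)"
      using \<open>A_set S S' f r n T \<subseteq> range (pdiam S S' f r n)\<close> countable_subset by blast
    show ?thesis unfolding En_def spP Psets[of n] by (rule meas_atoms[OF fg surjE sub cnt])
  qed
  have bound: "integral\<^sup>L (P n) F \<le> measure (P n) (En n)" if "n \<ge> N" for n
  proof -
    interpret prob_space "P n" by (rule Pprob)
    have "AE \<mu> in P n. F \<mu> \<le> indicator (En n) \<mu>"
      using PAE[of n] AE_space
    proof eventually_elim
      case (elim \<mu>)
      show ?case
      proof (cases "F \<mu> > 0")
        case True
        then have "cm_integral g \<mu> > 0" unfolding F_def by auto
        then obtain \<xi> where \<xi>: "\<mu> \<xi> \<noteq> 0" "g \<xi> \<noteq> 0" using cm_pos_ex by blast
        then obtain x where x: "\<xi> = pdiam S S' f r n x" using elim by blast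
        have "g \<xi> > 0" using \<xi>(2) gnn[of \<xi>] by linarith
        then have "\<xi> \<in> A_set S S' f r n T" using cert that x by blast
        then have "\<mu> \<in> En n" unfolding En_def using elim \<xi> by blast
        then show ?thesis using F01[of \<mu>] by simp
      next
        case False
        then show ?thesis by (simp add: indicator_def)
      qed
    qed
    then have "integral\<^sup>L (P n) F \<le> integral\<^sup>L (P n) (indicator (En n))"
      by (intro integral_mono_AE intP) (auto intro!: integrable_real_indicator En_sets simp: less_top[symmetric])
    then show ?thesis using En_sets[of n] by (simp add: Int_absorb2 sets.sets_into_space)
  qed
  have nonneg: "integral\<^sup>L (P n) F \<ge> 0" for n by (rule Bochner_Integration.integral_nonneg) (simp add: F01)
  have mlim: "(\<lambda>k. measure (P (s k)) (En (s k))) \<longlonglongrightarrow> 0"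
    using LIMSEQ_subseq_LIMSEQ[OF Plim[of T] smono] unfolding En_def o_def by simp
  have ev: "eventually (\<lambda>k. s k \<ge> N) sequentially"
    using filterlim_subseq[OF smono] unfolding filterlim_at_top by blast
  have "(\<lambda>k. integral\<^sup>L (P (s k)) F) \<longlonglongrightarrow> 0"
  proof (rule real_tendsto_sandwich[OF _ _ tendsto_const mlim])
    show "eventually (\<lambda>k. 0 \<le> integral\<^sup>L (P (s k)) F) sequentially" by (simp add: nonneg)
    show "eventually (\<lambda>k. integral\<^sup>L (P (s k)) F \<le> measure (P (s k)) (En (s k))) sequentially"
      using ev by eventually_elim (rule bound)
  qed
  then have "integral\<^sup>L Q F = 0" using lim LIMSEQ_unique by blast
  then have "AE \<mu> in Q. F \<mu> = 0"
    using integral_nonneg_eq_0_iff_AE[OF intQ] by (simp add: F01)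
  then show ?thesis
  proof eventually_elim
    case (elim \<mu>)
    then show ?case unfolding F_def by (auto simp: min_def max_def split: if_splits)
  qed
qed



lemma fun_tendsto:
  fixes f :: "'i \<Rightarrow> 'p \<Rightarrow> 'b::topological_space"
  assumes "\<And>y. ((\<lambda>c. f c y) \<longlongrightarrow> l y) F"
  shows "(f \<longlongrightarrow> l) F"
proof -
  have "limitin (product_topology (\<lambda>_. euclidean) UNIV) f l F"
    unfolding limitin_componentwise using assms by simp
  then show ?thesis by (simp add: euclidean_product_topology)
qed

lemma rat_approx: "(\<delta>::real) > 0 \<Longrightarrow> \<exists>q::rat. \<bar>of_rat q - x\<bar> < \<delta>"
proof -
  assume "\<delta> > 0"
  then obtain r where r: "r \<in> \<rat>" "x - \<delta> < r" "r < x + \<delta>" using Rats_dense_in_real[of "x - \<delta>" "x + \<delta>"] by auto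
  from r(1) obtain q where "r = of_rat q" by (cases rule: Rats_cases)
  then show ?thesis using r by (intro exI[of _ q]) auto
qed

type_synonym data = "nat \<times> nat list \<times> rat list \<times> rat"

definition tfd :: "(nat \<Rightarrow> 'p) \<Rightarrow> data \<Rightarrow> (('p \<Rightarrow> bool) \<times> ('p \<Rightarrow> real)) \<Rightarrow> real" where
  "tfd E d = (case d of (m, bs, qs, e) \<Rightarrow> tf E m (set bs) (\<lambda>k. of_rat (qs ! k)) (of_rat e))"

definition valid :: "data \<Rightarrow> bool" where
  "valid d = (case d of (m, bs, qs, e) \<Rightarrow> e > 0 \<and> (\<exists>k0\<le>m. k0 \<in> set bs))"

lemma tfd_Cc:
  fixes S :: "'a::group_add set" and S' :: "'b::group_add set" and E :: "nat \<Rightarrow> 'a \<times> 'b"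
  assumes "fin_generating S" "fin_generating S'" "valid d"
  shows "tfd E d \<in> Cc_funs S S'" "\<And>\<xi>. tfd E d \<xi> \<ge> 0"
proof -
  obtain m bs qs e where d: "d = (m, bs, qs, e)" by (cases d) auto
  obtain k0 where k0: "k0 \<le> m" "k0 \<in> set bs" and e: "e > 0" using assms(3) unfolding d valid_def by auto
  show "tfd E d \<in> Cc_funs S S'" unfolding d tfd_def
    by (simp, rule tf_Cc[OF assms(1,2) _ k0]) (use e in simp)
  show "\<And>\<xi>. tfd E d \<xi> \<ge> 0" unfolding d tfd_def by (simp add: tf_nonneg)
qed



lemma tfd_k0:
  assumes "valid d"
  shows "\<exists>k0. \<forall>\<xi>. tfd E d \<xi> \<noteq> 0 \<longrightarrow> fst \<xi> (E k0)"
proof -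
  obtain m bs qs e where d: "d = (m, bs, qs, e)" by (cases d) auto
  obtain k0 where k0: "k0 \<le> m" "k0 \<in> set bs" and e: "e > 0" using assms unfolding d valid_def by auto
  have "fst \<xi> (E k0)" if "tfd E d \<xi> \<noteq> 0" for \<xi>
  proof -
    have "tf E m (set bs) (\<lambda>k. of_rat (qs ! k)) (of_rat e) \<xi> > 0"
      using that tf_nonneg[of E m "set bs" "\<lambda>k. of_rat (qs ! k)" "of_rat e" \<xi>] unfolding d tfd_def by simp
    from tf_posD(1)[OF this] e k0 show ?thesis by simp
  qed
  then show ?thesis by blast
qed

lemma key:
  fixes S :: "'a::group_add set" and S' :: "'b::group_add set" and E :: "nat \<Rightarrow> 'a \<times> 'b"
    and f r :: "nat \<Rightarrow> nat"
  assumes fg: "fin_generating S" "fin_generating S'" and surjE: "surj E" and mf: "mono f"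
    and \<xi>0: "\<xi>0 \<in> Cspace S S'" and nh: "\<not> horoball_II S S' f r \<xi>0"
  shows "\<exists>d. valid d \<and> (\<exists>N T. \<forall>n\<ge>N. \<forall>x. tfd E d (pdiam S S' f r n x) > 0 \<longrightarrow>
                pdiam S S' f r n x \<in> A_set S S' f r n T) \<and> tfd E d \<xi>0 > 0"
proof -
  obtain y where "fst \<xi>0 y" using \<xi>0 unfolding Cspace_def by auto
  moreover obtain ks where "y = E ks" using surjD[OF surjE] by blast
  ultimately have ks: "fst \<xi>0 (E ks)" by simp
  have "\<forall>m k. \<exists>q::rat. \<bar>of_rat q - snd \<xi>0 (E k)\<bar> < 1 / (real m + 1)^2"
    by (intro allI rat_approx) simp
  then obtain qr where qr: "\<And>m k. \<bar>of_rat (qr m k) - snd \<xi>0 (E k)\<bar> < 1 / (real m + 1)^2" by metis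
  define D where "D m = (m, filter (\<lambda>k. fst \<xi>0 (E k)) [0..<Suc m], map (qr m) [0..<Suc m],
      1 / of_nat (Suc m) :: rat)" for m
  have tfD: "tfd E (D m) \<eta> = tf E m {k. k < Suc m \<and> fst \<xi>0 (E k)}
      (\<lambda>k. of_rat (map (qr m) [0..<Suc m] ! k)) (1 / (real m + 1)) \<eta>" for m \<eta>
  proof -
    have sf: "set (filter (\<lambda>k. fst \<xi>0 (E k)) [0..<Suc m]) = {k. k < Suc m \<and> fst \<xi>0 (E k)}"
      by (simp only: set_filter set_upt) auto
    have er: "real_of_rat (1 / of_nat (Suc m)) = 1 / (real m + 1)"
      by (simp add: of_rat_divide of_rat_add of_rat_of_nat_eq)
    show ?thesis unfolding tfd_def D_def by (simp only: prod.case sf er)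
  qed
  have qD: "k \<le> m \<Longrightarrow> map (qr m) [0..<Suc m] ! k = qr m k" for k m
    by (simp del: upt_Suc add: nth_map less_Suc_eq_le)
  have dsmall: "1 / (real m + 1)^2 \<le> 1 / (real m + 1)" for m
    by (simp add: divide_simps power2_eq_square)
  have P1: "(\<forall>k\<le>m. fst \<eta> (E k) = fst \<xi>0 (E k)) \<and>
            (\<forall>k\<le>m. \<bar>snd \<eta> (E k) - snd \<xi>0 (E k)\<bar> < 2 / (real m + 1))"
    if "tfd E (D m) \<eta> > 0" for m \<eta>
  proof -
    have p: "tf E m {k. k < Suc m \<and> fst \<xi>0 (E k)} (\<lambda>k. of_rat (map (qr m) [0..<Suc m] ! k)) (1 / (real m + 1)) \<eta> > 0"
      using that tfD by simp
    have e: "1 / (real m + 1) > 0" by simp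
    note A = tf_posD[OF p e]
    have "\<bar>snd \<eta> (E k) - snd \<xi>0 (E k)\<bar> < 2 / (real m + 1)" if k: "k \<le> m" for k
    proof -
      have "\<bar>snd \<eta> (E k) - of_rat (map (qr m) [0..<Suc m] ! k)\<bar>
          \<le> (\<Sum>k\<le>m. \<bar>snd \<eta> (E k) - of_rat (map (qr m) [0..<Suc m] ! k)\<bar>)"
        by (rule member_le_sum) (use k in auto)
      then have "\<bar>snd \<eta> (E k) - of_rat (qr m k)\<bar> < 1 / (real m + 1)" using A(2) qD[OF k] by simp
      moreover have "\<bar>of_rat (qr m k) - snd \<xi>0 (E k)\<bar> < 1 / (real m + 1)" using qr[of m k] dsmall[of m] by linarith
      ultimately show ?thesis by (simp add: add_divide_distrib[symmetric])
    qed
    moreover have "\<forall>k\<le>m. fst \<eta> (E k) = fst \<xi>0 (E k)" using A(1) by auto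
    ultimately show ?thesis by blast
  qed
  have P2: "tfd E (D m) \<xi>0 > 0" for m
  proof -
    have "(\<Sum>k\<le>m. \<bar>snd \<xi>0 (E k) - of_rat (map (qr m) [0..<Suc m] ! k)\<bar>) < (\<Sum>k\<le>m. 1 / (real m + 1)^2)"
    proof (rule sum_strict_mono)
      fix k assume "k \<in> {..m}"
      then show "\<bar>snd \<xi>0 (E k) - of_rat (map (qr m) [0..<Suc m] ! k)\<bar> < 1 / (real m + 1)^2"
        using qD[of k m] qr[of m k] by (simp add: abs_minus_commute)
    qed auto
    also have "(\<Sum>k\<le>m. 1 / (real m + 1)^2) = 1 / (real m + 1)"
      by (simp add: power2_eq_square divide_simps)
    finally have s: "(\<Sum>k\<le>m. \<bar>snd \<xi>0 (E k) - of_rat (map (qr m) [0..<Suc m] ! k)\<bar>) < 1 / (real m + 1)" .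
    show ?thesis unfolding tfD by (rule tf_posI) (use s in auto)
  qed
  have P3: "valid (D m)" if "ks \<le> m" for m
    unfolding valid_def D_def using that ks by (auto simp del: upt_Suc intro!: exI[of _ ks])
  have C: "\<exists>m\<ge>ks. \<forall>n\<ge>m. \<forall>x. tfd E (D m) (pdiam S S' f r n x) > 0 \<longrightarrow>
              word_dist S (fst x) 0 \<le> m \<or> word_dist S' (snd x) 0 \<le> m"
  proof (rule ccontr)
    assume nc: "\<not> ?thesis"
    have "\<forall>j. \<exists>n x. n \<ge> j + ks \<and> tfd E (D (j + ks)) (pdiam S S' f r n x) > 0 \<and>
            word_dist S (fst x) 0 > j + ks \<and> word_dist S' (snd x) 0 > j + ks"
    proof
      fix j
      have "ks \<le> j + ks" by simp
      with nc show "\<exists>n x. n \<ge> j + ks \<and> tfd E (D (j + ks)) (pdiam S S' f r n x) > 0 \<and>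
            word_dist S (fst x) 0 > j + ks \<and> word_dist S' (snd x) 0 > j + ks"
        by (auto simp: not_le)
    qed
    then obtain nk xk where H: "\<And>j. nk j \<ge> j + ks \<and> tfd E (D (j + ks)) (pdiam S S' f r (nk j) (xk j)) > 0 \<and>
            word_dist S (fst (xk j)) 0 > j + ks \<and> word_dist S' (snd (xk j)) 0 > j + ks" by metis
    define \<eta> where "\<eta> j = pdiam S S' f r (nk j) (xk j)" for j
    have h1: "filterlim nk at_top sequentially"
    proof (rule filterlim_at_top_mono[OF filterlim_ident])
      show "eventually (\<lambda>j. j \<le> nk j) sequentially" using H by (intro always_eventually allI) (meson le_add1 order_trans)
    qed
    have h2: "filterlim (\<lambda>k. word_dist S (fst (xk k)) 0) at_top sequentially"
    proof (rule filterlim_at_top_mono[OF filterlim_ident])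
      show "eventually (\<lambda>j. j \<le> word_dist S (fst (xk j)) 0) sequentially" using H
        by (intro always_eventually allI) (meson le_add1 order_trans less_imp_le)
    qed
    have h3: "filterlim (\<lambda>k. word_dist S' (snd (xk k)) 0) at_top sequentially"
    proof (rule filterlim_at_top_mono[OF filterlim_ident])
      show "eventually (\<lambda>j. j \<le> word_dist S' (snd (xk j)) 0) sequentially" using H
        by (intro always_eventually allI) (meson le_add1 order_trans less_imp_le)
    qed
    have PP: "(\<forall>k\<le>j + ks. fst (\<eta> j) (E k) = fst \<xi>0 (E k)) \<and>
            (\<forall>k\<le>j + ks. \<bar>snd (\<eta> j) (E k) - snd \<xi>0 (E k)\<bar> < 2 / (real (j + ks) + 1))" for j
      using P1 H[of j] unfolding \<eta>_def by blast
    have t1: "(\<lambda>j. fst (\<eta> j)) \<longlonglongrightarrow> fst \<xi>0"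
    proof (rule fun_tendsto)
      fix y obtain k where y: "y = E k" using surjD[OF surjE] by blast
      have "eventually (\<lambda>j. fst (\<eta> j) y = fst \<xi>0 y) sequentially"
        unfolding eventually_sequentially y using PP by (intro exI[of _ k]) auto
      then show "(\<lambda>j. fst (\<eta> j) y) \<longlonglongrightarrow> fst \<xi>0 y" by (rule tendsto_eventually)
    qed
    have t2: "(\<lambda>j. snd (\<eta> j)) \<longlonglongrightarrow> snd \<xi>0"
    proof (rule fun_tendsto)
      fix y obtain k where y: "y = E k" using surjD[OF surjE] by blast
      have "eventually (\<lambda>j. norm (snd (\<eta> j) y - snd \<xi>0 y) \<le> 2 * inverse (real (Suc j))) sequentially"
        unfolding eventually_sequentially y
      proof (intro exI[of _ k] allI impI)
        fix j assume "k \<le> j"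
        then have "\<bar>snd (\<eta> j) (E k) - snd \<xi>0 (E k)\<bar> < 2 / (real (j + ks) + 1)" using PP by auto
        moreover have "2 / (real (j + ks) + 1) \<le> 2 * inverse (real (Suc j))"
          by (simp add: divide_simps)
        ultimately show "norm (snd (\<eta> j) (E k) - snd \<xi>0 (E k)) \<le> 2 * inverse (real (Suc j))" by simp
      qed
      moreover have "(\<lambda>j. 2 * inverse (real (Suc j))) \<longlonglongrightarrow> 0"
        using tendsto_mult_right_zero[OF LIMSEQ_inverse_real_of_nat, of 2] by simp
      ultimately have "(\<lambda>j. snd (\<eta> j) y - snd \<xi>0 y) \<longlonglongrightarrow> 0" by (rule Lim_null_comparison)
      then show "(\<lambda>j. snd (\<eta> j) y) \<longlonglongrightarrow> snd \<xi>0 y" by (rule LIM_zero_cancel)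
    qed
    have "(\<lambda>j. (fst (\<eta> j), snd (\<eta> j))) \<longlonglongrightarrow> (fst \<xi>0, snd \<xi>0)" by (rule tendsto_Pair[OF t1 t2])
    then have "(\<lambda>j. pdiam S S' f r (nk j) (xk j)) \<longlonglongrightarrow> \<xi>0" unfolding \<eta>_def by simp
    then have "horoball_II S S' f r \<xi>0" unfolding horoball_II_def using \<xi>0 h1 h2 h3 by blast
    then show False using nh by simp
  qed
  then obtain m where m: "ks \<le> m" and mC: "\<And>n x. n \<ge> m \<Longrightarrow> tfd E (D m) (pdiam S S' f r n x) > 0 \<Longrightarrow>
              word_dist S (fst x) 0 \<le> m \<or> word_dist S' (snd x) 0 \<le> m" by blast
  define a where "a = fst (E ks)"
  define b where "b = snd (E ks)"
  define T where "T = real m + real (word_dist S 0 a) + real (word_dist S' 0 b) + 1"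
  have cert: "pdiam S S' f r n x \<in> A_set S S' f r n T"
    if n: "n \<ge> m" and pos: "tfd E (D m) (pdiam S S' f r n x) > 0" for n x
  proof -
    have "fst (pdiam S S' f r n x) (E ks) = fst \<xi>0 (E ks)" using P1[OF pos] m by blast
    then have "diamond S S' f r n x (a, b)" using ks unfolding pdiam_def a_def b_def by simp
    then obtain t where t: "t \<le> r n" "word_dist S (fst x) a = r n - t" "word_dist S' (snd x) b \<le> f t"
      unfolding diamond_def by auto
    have ft: "f t \<le> f (r n)" using mf t(1) by (rule monoD)
    have tri1: "word_dist S 0 (fst x) \<le> word_dist S 0 a + word_dist S a (fst x)" by (rule wd_tri[OF fg(1)])
    have tri2: "word_dist S' 0 (snd x) \<le> word_dist S' 0 b + word_dist S' b (snd x)" by (rule wd_tri[OF fg(2)])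
    have s1: "word_dist S a (fst x) = word_dist S (fst x) a" by (rule wd_sym[OF fg(1)])
    have s2: "word_dist S' b (snd x) = word_dist S' (snd x) b" by (rule wd_sym[OF fg(2)])
    have s3: "word_dist S 0 (fst x) = word_dist S (fst x) 0" by (rule wd_sym[OF fg(1)])
    have s4: "word_dist S' 0 (snd x) = word_dist S' (snd x) 0" by (rule wd_sym[OF fg(2)])
    have n1: "word_dist S 0 (fst x) \<le> word_dist S 0 a + r n" using tri1 s1 t(2) by linarith
    have n2: "word_dist S' 0 (snd x) \<le> word_dist S' 0 b + f (r n)" using tri2 s2 t(3) ft by linarith
    have r1: "real (word_dist S 0 (fst x)) \<le> real (word_dist S 0 a) + real (r n)"
      using n1 by (simp only: of_nat_add[symmetric] of_nat_le_iff)
    have r2: "real (word_dist S' 0 (snd x)) \<le> real (word_dist S' 0 b) + real (f (r n))"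
      using n2 by (simp only: of_nat_add[symmetric] of_nat_le_iff)
    from mC[OF n pos] have
      "(real (word_dist S 0 (fst x)) < real (r n) + T \<and> real (word_dist S' 0 (snd x)) < T) \<or>
       (real (word_dist S' 0 (snd x)) < real (f (r n)) + T \<and> real (word_dist S 0 (fst x)) < T)"
    proof
      assume "word_dist S (fst x) 0 \<le> m"
      then have "real (word_dist S 0 (fst x)) \<le> real m" using s3 by simp
      then show ?thesis using r2 unfolding T_def by simp
    next
      assume "word_dist S' (snd x) 0 \<le> m"
      then have "real (word_dist S' 0 (snd x)) \<le> real m" using s4 by simp
      then show ?thesis using r1 unfolding T_def by simp
    qed
    then show ?thesis unfolding A_set_def by blast
  qed
  show ?thesis
    by (rule exI[of _ "D m"]) (use P3[OF m] P2 cert in blast)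
qed



theorem lemma3p6:
  fixes S :: "'a::group_add set" and S' :: "'b::group_add set"
    and f r :: "nat \<Rightarrow> nat"
    and P :: "nat \<Rightarrow> (('a, 'b) pset \<Rightarrow> nat) measure"
    and Q :: "(('a, 'b) pset \<Rightarrow> nat) measure"
    and s :: "nat \<Rightarrow> nat"
  assumes "fin_generating S" and "fin_generating S'"
    and "growth_rate S > 1" and "growth_rate S' > 1"
    and "mono f" and "f 0 = 0" and "strict_mono r"
    and "0 < (INF n. real (ball_vol S' (f (r n))) / real (ball_vol S (r n)))"
    and "bdd_above (range (\<lambda>n. real (ball_vol S' (f (r n))) / real (ball_vol S (r n))))"
    and "\<forall>m. \<exists>N. \<forall>n\<ge>N. \<bar>real (f (n + m)) - real (f n) - cexp S S' * real m\<bar> \<le> 1"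
    and "\<And>n. prob_space (P n)"
    and "\<And>n. sets (P n) = sets (borel_of (vague_top S S'))"
    and "\<And>n. AE \<mu> in P n. \<forall>\<xi>. \<mu> \<xi> \<noteq> 0 \<longrightarrow> \<xi> \<in> range (pdiam S S' f r n)"
    and "\<And>T::real. (\<lambda>n. measure (P n) {\<mu> \<in> space (P n). \<exists>\<xi>\<in>A_set S S' f r n T. \<mu> \<xi> \<noteq> 0})
                    \<longlonglongrightarrow> 0"
    and "prob_space Q" and "sets Q = sets (borel_of (vague_top S S'))"
    and "strict_mono s" and "weak_conv_top (vague_top S S') (\<lambda>k. P (s k)) Q"
  shows "AE \<mu> in Q. \<forall>\<xi>. \<mu> \<xi> \<noteq> 0 \<longrightarrow> horoball_II S S' f r \<xi>"
proof -
  note fg = assms(1,2)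
  define E where "E = from_nat_into (UNIV :: ('a \<times> 'b) set)"
  have surjE: "surj E" unfolding E_def using countable_pairs[OF fg] by simp
  define Cd where "Cd = {d. valid d \<and> (\<exists>N T. \<forall>n\<ge>N. \<forall>x. tfd E d (pdiam S S' f r n x) > 0 \<longrightarrow>
                pdiam S S' f r n x \<in> A_set S S' f r n T)}"
  have "\<forall>d\<in>Cd. AE \<mu> in Q. cm_integral (tfd E d) \<mu> \<le> 0"
  proof
    fix d assume "d \<in> Cd"
    then obtain N T where v: "valid d" and c: "\<forall>n\<ge>N. \<forall>x. tfd E d (pdiam S S' f r n x) > 0 \<longrightarrow>
                pdiam S S' f r n x \<in> A_set S S' f r n T" unfolding Cd_def by blast
    show "AE \<mu> in Q. cm_integral (tfd E d) \<mu> \<le> 0"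
      by (rule AE_from_cert[OF fg surjE assms(11-18) tfd_Cc[OF fg v] c])
  qed
  then have "AE \<mu> in Q. \<forall>d\<in>Cd. cm_integral (tfd E d) \<mu> \<le> 0"
    by (subst AE_ball_countable) auto
  then show ?thesis using AE_space
  proof eventually_elim
    case (elim \<mu>)
    have disc: "\<mu> \<in> disc_sets S S'"
      using elim sets_eq_imp_space_eq[OF assms(16)] by (simp add: space_borel_of topspace_vague)
    show ?case
    proof (intro allI impI)
      fix \<xi> assume \<xi>: "\<mu> \<xi> \<noteq> 0"
      then have \<xi>C: "\<xi> \<in> Cspace S S'" using disc unfolding disc_sets_def by blast
      show "horoball_II S S' f r \<xi>"
      proof (rule ccontr)
        assume "\<not> horoball_II S S' f r \<xi>"
        from key[OF fg surjE assms(5) \<xi>C this] obtain d where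
          d: "d \<in> Cd" and pos: "tfd E d \<xi> > 0" unfolding Cd_def by blast
        then have v: "valid d" unfolding Cd_def by auto
        obtain k0 where k0: "\<forall>\<xi>'. tfd E d \<xi>' \<noteq> 0 \<longrightarrow> fst \<xi>' (E k0)" using tfd_k0[OF v] by blast
        have "\<forall>y. finite {\<xi>'. \<mu> \<xi>' \<noteq> 0 \<and> fst \<xi>' y}" using disc unfolding disc_sets_def by blast
        then have "finite {\<xi>'. \<mu> \<xi>' \<noteq> 0 \<and> fst \<xi>' (E k0)}" by blast
        then have fin: "finite {\<xi>'. \<mu> \<xi>' \<noteq> 0 \<and> tfd E d \<xi>' \<noteq> 0}"
          by (rule finite_subset[rotated]) (use k0 in auto)
        have "cm_integral (tfd E d) \<mu> \<ge> real (\<mu> \<xi>) * tfd E d \<xi>"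
          by (rule cm_ge_term[OF tfd_Cc(2)[OF fg v] fin])
        moreover have "real (\<mu> \<xi>) * tfd E d \<xi> > 0" using \<xi> pos by simp
        moreover have "cm_integral (tfd E d) \<mu> \<le> 0" using elim d by blast
        ultimately show False by linarith
      qed
    qed
  qed
qed


end
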